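(* Let $(M,\bar g)$ be an umbilically synchronized space-time and let $V$ be a conformal vector field on $M$ ($\pounds_V\bar g=2\psi\bar g$ for a smooth function $\psi$) that is tangential to the spatial slices $\Sigma_t$. Then $V$ is Killing if and only if the lapse function $N$ is constant along $V$ (i.e. $V(N)=0$), equivalently, if and only if $V$ is orthogonal to the acceleration vector field $\mathbf A=\bar\nabla_{\mathbf n}\mathbf n$.
   Context: An umbilically synchronized space-time is an $(n+1)$-dimensional Lorentzian manifold $M$ with coordinates $(t,x^1,\dots,x^n)$ and metric $ds^2=-N^2dt^2+g_{ij}dx^idx^j$ (zero shift), lapse $N>0$, such that each spatial slice $\Sigma_t=\{t=\text{const}\}$ is totally umbilical: $K_{ij}=\bar g(\bar\nabla_{\partial_i}\mathbf n,\partial_j)=\tau g_{ij}$, where $\mathbf n=\frac1N\partial_t$ is the unit normal and $\tau$ the mean curvature. The acceleration $\mathbf A=\bar\nabla_{\mathbf n}\mathbf n$ equals the spatial gradient of $\ln N$. *)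

theory Defs
  imports "HOL-Analysis.Analysis"
begin

text \<open>Space-time is modelled as an open coordinate domain U of real^'m
 (coordinates x^a, a :: 'm), with a distinguished index t0 (the time coordinate t);
 the remaining indices are the spatial coordinates x^1..x^n.\<close>

definition pd :: "(real^'m \<Rightarrow> real) \<Rightarrow> 'm \<Rightarrow> real^'m \<Rightarrow> real" where
  "pd f k p = frechet_derivative f (at p) (axis k 1)"

fun iter_pd :: "'m list \<Rightarrow> (real^'m \<Rightarrow> real) \<Rightarrow> real^'m \<Rightarrow> real" where
  "iter_pd [] f = f"
| "iter_pd (k # ks) f = pd (iter_pd ks f) k"

definition smooth_on :: "(real^'m) set \<Rightarrow> (real^'m \<Rightarrow> real) \<Rightarrow> bool" where
  "smooth_on U f \<longleftrightarrow> (\<forall>ks. continuous_on U (iter_pd ks f) \<and>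
                              (\<forall>p\<in>U. iter_pd ks f differentiable (at p)))"

definition gprod :: "(real^'m \<Rightarrow> 'm \<Rightarrow> 'm \<Rightarrow> real) \<Rightarrow> real^'m \<Rightarrow> real^'m \<Rightarrow> real^'m \<Rightarrow> real" where
  "gprod gb p X Y = (\<Sum>a\<in>UNIV. \<Sum>b\<in>UNIV. gb p a b * X$a * Y$b)"

definition ginv :: "(real^'m \<Rightarrow> 'm \<Rightarrow> 'm \<Rightarrow> real) \<Rightarrow> real^'m \<Rightarrow> 'm \<Rightarrow> 'm \<Rightarrow> real" where
  "ginv gb p a b = matrix_inv (\<chi> i j. gb p i j) $ a $ b"

definition christoffel :: "(real^'m \<Rightarrow> 'm \<Rightarrow> 'm \<Rightarrow> real) \<Rightarrow> real^'m \<Rightarrow> 'm \<Rightarrow> 'm \<Rightarrow> 'm \<Rightarrow> real" where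
  "christoffel gb p a b c = (1/2) * (\<Sum>d\<in>UNIV. ginv gb p a d *
      (pd (\<lambda>q. gb q d c) b p + pd (\<lambda>q. gb q d b) c p - pd (\<lambda>q. gb q b c) d p))"

definition covd :: "(real^'m \<Rightarrow> 'm \<Rightarrow> 'm \<Rightarrow> real) \<Rightarrow> (real^'m \<Rightarrow> real^'m) \<Rightarrow> (real^'m \<Rightarrow> real^'m) \<Rightarrow> real^'m \<Rightarrow> real^'m" where
  "covd gb Y X p = (\<chi> a. \<Sum>b\<in>UNIV. Y p $ b *
      (pd (\<lambda>q. X q $ a) b p + (\<Sum>c\<in>UNIV. christoffel gb p a b c * X p $ c)))"

definition unit_normal :: "'m \<Rightarrow> (real^'m \<Rightarrow> real) \<Rightarrow> real^'m \<Rightarrow> real^'m" where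
  "unit_normal t0 N p = (1 / N p) *\<^sub>R axis t0 1"

definition accel :: "'m \<Rightarrow> (real^'m \<Rightarrow> 'm \<Rightarrow> 'm \<Rightarrow> real) \<Rightarrow> (real^'m \<Rightarrow> real) \<Rightarrow> real^'m \<Rightarrow> real^'m" where
  "accel t0 gb N = covd gb (unit_normal t0 N) (unit_normal t0 N)"

definition sff :: "'m \<Rightarrow> (real^'m \<Rightarrow> 'm \<Rightarrow> 'm \<Rightarrow> real) \<Rightarrow> (real^'m \<Rightarrow> real) \<Rightarrow> real^'m \<Rightarrow> 'm \<Rightarrow> 'm \<Rightarrow> real" where
  "sff t0 gb N p i j = gprod gb p (covd gb (\<lambda>_. axis i 1) (unit_normal t0 N) p) (axis j 1)"

definition lie_metric :: "(real^'m \<Rightarrow> 'm \<Rightarrow> 'm \<Rightarrow> real) \<Rightarrow> (real^'m \<Rightarrow> real^'m) \<Rightarrow> real^'m \<Rightarrow> 'm \<Rightarrow> 'm \<Rightarrow> real" where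
  "lie_metric gb V p a b = (\<Sum>c\<in>UNIV. V p $ c * pd (\<lambda>q. gb q a b) c p
      + gb p c b * pd (\<lambda>q. V q $ c) a p + gb p a c * pd (\<lambda>q. V q $ c) b p)"

definition vf_apply :: "(real^'m \<Rightarrow> real^'m) \<Rightarrow> (real^'m \<Rightarrow> real) \<Rightarrow> real^'m \<Rightarrow> real" where
  "vf_apply V f p = (\<Sum>c\<in>UNIV. V p $ c * pd f c p)"

text \<open>Umbilically synchronized space-time: ds^2 = -N^2 dt^2 + g_ij dx^i dx^j
 (zero shift), N > 0, g_ij Riemannian, every slice t = const totally umbilical.\<close>
definition umb_sync :: "(real^'m) set \<Rightarrow> 'm \<Rightarrow> (real^'m \<Rightarrow> 'm \<Rightarrow> 'm \<Rightarrow> real) \<Rightarrow> (real^'m \<Rightarrow> real) \<Rightarrow> bool" where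
  "umb_sync U t0 gb N \<longleftrightarrow>
     open U \<and> smooth_on U N \<and> (\<forall>a b. smooth_on U (\<lambda>p. gb p a b)) \<and>
     (\<forall>p\<in>U. N p > 0 \<and> gb p t0 t0 = - ((N p) ^ 2) \<and>
        (\<forall>i. i \<noteq> t0 \<longrightarrow> gb p t0 i = 0 \<and> gb p i t0 = 0) \<and>
        (\<forall>a b. gb p a b = gb p b a) \<and>
        (\<forall>v. v $ t0 = 0 \<and> v \<noteq> 0 \<longrightarrow> gprod gb p v v > 0)) \<and>
     (\<exists>\<tau>. \<forall>p\<in>U. \<forall>i j. i \<noteq> t0 \<longrightarrow> j \<noteq> t0 \<longrightarrow> sff t0 gb N p i j = \<tau> p * gb p i j)"

definition conformal_vf :: "(real^'m) set \<Rightarrow> (real^'m \<Rightarrow> 'm \<Rightarrow> 'm \<Rightarrow> real) \<Rightarrow> (real^'m \<Rightarrow> real^'m) \<Rightarrow> bool" where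
  "conformal_vf U gb V \<longleftrightarrow> (\<forall>c. smooth_on U (\<lambda>p. V p $ c)) \<and>
     (\<exists>\<psi>. smooth_on U \<psi> \<and> (\<forall>p\<in>U. \<forall>a b. lie_metric gb V p a b = 2 * \<psi> p * gb p a b))"

definition killing_vf :: "(real^'m) set \<Rightarrow> (real^'m \<Rightarrow> 'm \<Rightarrow> 'm \<Rightarrow> real) \<Rightarrow> (real^'m \<Rightarrow> real^'m) \<Rightarrow> bool" where
  "killing_vf U gb V \<longleftrightarrow> (\<forall>c. smooth_on U (\<lambda>p. V p $ c)) \<and>
     (\<forall>p\<in>U. \<forall>a b. lie_metric gb V p a b = 0)"

end

theory Submission imports Defs begin

lemma pd_eq_deriv:
  assumes "open U" "p \<in> U" "\<And>q. q \<in> U \<Longrightarrow> g q = f q" "(g has_derivative g') (at p)"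
  shows "pd f k p = g' (axis k 1)"
proof -
  have "(f has_derivative g') (at p)"
    using has_derivative_transform_within_open[OF assms(4) assms(1) assms(2)] assms(3) by blast
  then show ?thesis unfolding pd_def using frechet_derivative_at by metis
qed

lemma sum_single:
  fixes f :: "'m::finite \<Rightarrow> real"
  assumes "\<And>c. c \<noteq> a \<Longrightarrow> f c = 0"
  shows "sum f UNIV = f a"
proof -
  have "sum f UNIV = f a + sum f (UNIV - {a})" by (simp add: sum.remove)
  also have "sum f (UNIV - {a}) = 0" using assms by (intro sum.neutral) auto
  finally show ?thesis by simp
qed

lemma pd_const0: fixes p :: "real^'m" shows "pd (\<lambda>q. 0) k p = 0"
proof -
  have "((\<lambda>q::real^'m. 0::real) has_derivative (\<lambda>h. 0)) (at p)" by (rule has_derivative_const)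
  then show ?thesis unfolding pd_def using frechet_derivative_at by metis
qed

lemma key:
  fixes U :: "(real^'m) set" and t0 :: 'm
    and gb :: "real^'m \<Rightarrow> 'm \<Rightarrow> 'm \<Rightarrow> real" and N :: "real^'m \<Rightarrow> real"
    and V :: "real^'m \<Rightarrow> real^'m"
  assumes us: "umb_sync U t0 gb N" and pU: "p \<in> U" and Vt: "\<forall>q\<in>U. V q $ t0 = 0"
  shows "lie_metric gb V p t0 t0 = -2 * N p * vf_apply V N p"
    and "gprod gb p (V p) (accel t0 gb N p) = vf_apply V N p / N p"
proof -
  have oU: "open U" using us unfolding umb_sync_def by blast
  have sN: "smooth_on U N" using us unfolding umb_sync_def by blast
  have Npos: "N q > 0" if "q \<in> U" for q using us that unfolding umb_sync_def by blast
  have g00: "gb q t0 t0 = - ((N q)^2)" if "q \<in> U" for q using us that unfolding umb_sync_def by blast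
  have goff1: "gb q t0 i = 0" if "q \<in> U" "i \<noteq> t0" for q i using us that unfolding umb_sync_def by blast
  have goff2: "gb q i t0 = 0" if "q \<in> U" "i \<noteq> t0" for q i using us that unfolding umb_sync_def by blast
  have gpos: "gprod gb p v v > 0" if "v $ t0 = 0" "v \<noteq> 0" for v using us pU that unfolding umb_sync_def by blast
  have Ndiff: "N differentiable (at p)" using sN pU unfolding smooth_on_def
    by (metis iter_pd.simps(1))
  define DN where "DN = frechet_derivative N (at p)"
  have DNd: "(N has_derivative DN) (at p)" using Ndiff frechet_derivative_works DN_def by blast
  have pdN: "pd N c p = DN (axis c 1)" for c unfolding pd_def DN_def by simp
  have pdg00: "pd (\<lambda>q. gb q t0 t0) c p = -2 * N p * pd N c p" for c
  proof -
    have D: "((\<lambda>q. - (N q * N q)) has_derivative (\<lambda>h. - (N p * DN h + DN h * N p))) (at p)"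
      by (rule has_derivative_minus[OF has_derivative_mult[OF DNd DNd]])
    have "pd (\<lambda>q. gb q t0 t0) c p = - (N p * DN (axis c 1) + DN (axis c 1) * N p)"
      by (rule pd_eq_deriv[OF oU pU _ D]) (simp add: g00 power2_eq_square)
    then show ?thesis by (simp add: pdN)
  qed
  have pdgoff: "pd (\<lambda>q. gb q d t0) c p = 0" if "d \<noteq> t0" for d c
    using pd_eq_deriv[OF oU pU, of "\<lambda>q. 0" "\<lambda>q. gb q d t0" "\<lambda>h. 0" c] goff2 that
    by (simp add: has_derivative_const)
  have pdVt: "pd (\<lambda>q. V q $ t0) c p = 0" for c
    using pd_eq_deriv[OF oU pU, of "\<lambda>q. 0" "\<lambda>q. V q $ t0" "\<lambda>h. 0" c] Vt
    by (simp add: has_derivative_const)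
  show "lie_metric gb V p t0 t0 = -2 * N p * vf_apply V N p"
  proof -
    have "lie_metric gb V p t0 t0 = (\<Sum>c\<in>UNIV. V p $ c * (-2 * N p * pd N c p))"
      unfolding lie_metric_def
    proof (rule sum.cong[OF refl])
      fix c show "V p $ c * pd (\<lambda>q. gb q t0 t0) c p + gb p c t0 * pd (\<lambda>q. V q $ c) t0 p +
          gb p t0 c * pd (\<lambda>q. V q $ c) t0 p = V p $ c * (-2 * N p * pd N c p)"
        using pU Vt by (cases "c = t0") (auto simp: pdg00 pdVt goff1 goff2)
    qed
    also have "\<dots> = -2 * N p * vf_apply V N p"
      unfolding vf_apply_def by (simp add: sum_distrib_left algebra_simps)
    finally show ?thesis .
  qed
  define G :: "real^'m^'m" where "G = (\<chi> i j. gb p i j)"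
  have Gv: "(G *v x) $ a = (\<Sum>b\<in>UNIV. gb p a b * x $ b)" for x a
    unfolding G_def by (simp add: matrix_vector_mult_def)
  have ker: "\<forall>x. G *v x = 0 \<longrightarrow> x = 0"
  proof (intro allI impI)
    fix x assume x0: "G *v x = 0"
    have "(G *v x) $ t0 = gb p t0 t0 * x $ t0"
      unfolding Gv by (rule sum_single) (simp add: goff1 pU)
    then have "- ((N p)^2) * x $ t0 = 0" using x0 g00 pU by simp
    then have xt: "x $ t0 = 0" using Npos[OF pU] by simp
    have "gprod gb p x x = (\<Sum>a\<in>UNIV. x $ a * (G *v x) $ a)"
      unfolding gprod_def Gv by (simp add: sum_distrib_left algebra_simps)
    also have "\<dots> = 0" using x0 by simp
    finally show "x = 0" using gpos[OF xt] by force
  qed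
  then obtain B where "B ** G = mat 1" using matrix_left_invertible_ker by blast
  then have "invertible G" using invertible_left_inverse by blast
  then have "G ** matrix_inv G = mat 1"
    unfolding invertible_def matrix_inv_def by (rule someI_ex[where P = "\<lambda>A'. G ** A' = mat 1 \<and> A' ** G = mat 1", THEN conjunct1])
  then have "(G ** matrix_inv G) $ a $ d = mat 1 $ a $ d" for a d by simp
  then have ginvrel: "(\<Sum>b\<in>UNIV. gb p a b * ginv gb p b d) = (if a = d then 1 else 0)" for a d
    unfolding ginv_def G_def by (simp add: matrix_matrix_mult_def mat_def)
  define nn where "nn = unit_normal t0 N"
  have nnc: "nn q $ b = (if b = t0 then 1 / N q else 0)" for q b
    unfolding nn_def unit_normal_def axis_def by simp
  have pdn: "pd (\<lambda>q. nn q $ b) c p = 0" if "b \<noteq> t0" for b c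
  proof -
    have "(\<lambda>q. nn q $ b) = (\<lambda>q. 0)" using that by (simp add: nnc)
    then show ?thesis by (simp add: pd_const0)
  qed
  have Ac: "accel t0 gb N p $ b = (1 / N p) * (pd (\<lambda>q. nn q $ b) t0 p + christoffel gb p b t0 t0 * (1 / N p))" for b
  proof -
    have "accel t0 gb N p $ b = (\<Sum>e\<in>UNIV. nn p $ e *
      (pd (\<lambda>q. nn q $ b) e p + (\<Sum>c\<in>UNIV. christoffel gb p b e c * nn p $ c)))"
      unfolding accel_def covd_def nn_def by simp
    also have "\<dots> = nn p $ t0 *
      (pd (\<lambda>q. nn q $ b) t0 p + (\<Sum>c\<in>UNIV. christoffel gb p b t0 c * nn p $ c))"
      by (rule sum_single) (simp add: nnc)
    also have "(\<Sum>c\<in>UNIV. christoffel gb p b t0 c * nn p $ c) = christoffel gb p b t0 t0 * nn p $ t0"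
      by (rule sum_single) (simp add: nnc)
    finally show ?thesis by (simp add: nnc)
  qed
  have rowA: "(\<Sum>b\<in>UNIV. gb p a b * accel t0 gb N p $ b) = pd N a p / N p" if at0: "a \<noteq> t0" for a
  proof -
    have s1: "(\<Sum>b\<in>UNIV. gb p a b * pd (\<lambda>q. nn q $ b) t0 p) = 0"
      by (rule sum.neutral) (metis goff2[OF pU at0] mult_zero_left mult_zero_right pdn)
    define X where "X d = pd (\<lambda>q. gb q d t0) t0 p + pd (\<lambda>q. gb q d t0) t0 p - pd (\<lambda>q. gb q t0 t0) d p" for d
    have "(\<Sum>b\<in>UNIV. gb p a b * christoffel gb p b t0 t0)
        = (1/2) * (\<Sum>b\<in>UNIV. \<Sum>d\<in>UNIV. gb p a b * ginv gb p b d * X d)"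
      unfolding christoffel_def X_def by (simp add: sum_distrib_left algebra_simps)
    also have "\<dots> = (1/2) * (\<Sum>d\<in>UNIV. (\<Sum>b\<in>UNIV. gb p a b * ginv gb p b d) * X d)"
      by (subst sum.swap) (simp add: sum_distrib_right)
    also have "\<dots> = (1/2) * X a"
      by (subst sum_single[where a=a]) (simp_all add: ginvrel)
    also have "\<dots> = N p * pd N a p"
      unfolding X_def using at0 by (simp add: pdgoff pdg00)
    finally have s2: "(\<Sum>b\<in>UNIV. gb p a b * christoffel gb p b t0 t0) = N p * pd N a p" .
    have "(\<Sum>b\<in>UNIV. gb p a b * accel t0 gb N p $ b)
       = (1 / N p) * (\<Sum>b\<in>UNIV. gb p a b * pd (\<lambda>q. nn q $ b) t0 p)
         + (1 / N p)^2 * (\<Sum>b\<in>UNIV. gb p a b * christoffel gb p b t0 t0)"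
      unfolding Ac by (simp add: sum_distrib_left sum.distrib algebra_simps power2_eq_square)
    also have "\<dots> = pd N a p / N p" using s1 s2 Npos[OF pU] by (simp add: power2_eq_square)
    finally show ?thesis .
  qed
  have "gprod gb p (V p) (accel t0 gb N p) = (\<Sum>a\<in>UNIV. V p $ a * (\<Sum>b\<in>UNIV. gb p a b * accel t0 gb N p $ b))"
    unfolding gprod_def by (simp add: sum_distrib_left algebra_simps)
  also have "\<dots> = (\<Sum>a\<in>UNIV. V p $ a * pd N a p / N p)"
  proof (rule sum.cong[OF refl])
    fix a show "V p $ a * (\<Sum>b\<in>UNIV. gb p a b * accel t0 gb N p $ b) = V p $ a * pd N a p / N p"
      using Vt pU rowA by (cases "a = t0") auto
  qed
  also have "\<dots> = vf_apply V N p / N p"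
    unfolding vf_apply_def by (simp add: sum_divide_distrib)
  finally show "gprod gb p (V p) (accel t0 gb N p) = vf_apply V N p / N p" .
qed

theorem theorem4:
  fixes U :: "(real^'m) set" and t0 :: 'm
    and gb :: "real^'m \<Rightarrow> 'm \<Rightarrow> 'm \<Rightarrow> real" and N :: "real^'m \<Rightarrow> real"
    and V :: "real^'m \<Rightarrow> real^'m"
  assumes "CARD('m) \<ge> 2"
    and "umb_sync U t0 gb N"
    and "conformal_vf U gb V"
    and "\<forall>p\<in>U. V p $ t0 = 0"
  shows "(killing_vf U gb V \<longleftrightarrow> (\<forall>p\<in>U. vf_apply V N p = 0)) \<and>
         ((\<forall>p\<in>U. vf_apply V N p = 0) \<longleftrightarrow> (\<forall>p\<in>U. gprod gb p (V p) (accel t0 gb N p) = 0))"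
proof -
  note k1 = key(1)[OF assms(2) _ assms(4)]
  note k2 = key(2)[OF assms(2) _ assms(4)]
  have Npos: "N q > 0" if "q \<in> U" for q using assms(2) that unfolding umb_sync_def by blast
  have g00: "gb q t0 t0 = - ((N q)^2)" if "q \<in> U" for q using assms(2) that unfolding umb_sync_def by blast
  have smV: "\<forall>c. smooth_on U (\<lambda>p. V p $ c)" using assms(3) unfolding conformal_vf_def by blast
  obtain \<psi> where psi: "\<forall>p\<in>U. \<forall>a b. lie_metric gb V p a b = 2 * \<psi> p * gb p a b"
    using assms(3) unfolding conformal_vf_def by blast
  have P1: "killing_vf U gb V \<longleftrightarrow> (\<forall>p\<in>U. vf_apply V N p = 0)"
  proof
    assume "killing_vf U gb V"
    then have "\<forall>p\<in>U. lie_metric gb V p t0 t0 = 0" unfolding killing_vf_def by blast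
    then show "\<forall>p\<in>U. vf_apply V N p = 0" using k1 Npos by fastforce
  next
    assume D0: "\<forall>p\<in>U. vf_apply V N p = 0"
    have "\<psi> p = 0" if pU: "p \<in> U" for p
    proof -
      have "-2 * N p * vf_apply V N p = 2 * \<psi> p * (- ((N p)^2))"
        using psi k1[OF pU] g00[OF pU] pU by metis
      then have "\<psi> p * (N p)^2 = 0" using D0 pU by simp
      then show ?thesis using Npos[OF pU] by simp
    qed
    then show "killing_vf U gb V" unfolding killing_vf_def using smV psi by simp
  qed
  have P2: "(\<forall>p\<in>U. vf_apply V N p = 0) \<longleftrightarrow> (\<forall>p\<in>U. gprod gb p (V p) (accel t0 gb N p) = 0)"
    using k2 Npos by (metis divide_eq_0_iff less_irrefl)
  show ?thesis using P1 P2 by blast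
qed

end
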